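(* For every $\rho\in\mathcal{S}(\mathbb{C}^2)$ one has $D_z^2\big(\rho,\tfrac12(I+\sigma_z)\big)=2-2(\mathbf{b}_\rho)_3$.
   Context: Let $\mathcal{H}=\mathbb{C}^2$, $\mathcal{H}^*$ its dual space, and $\mathcal{S}(\mathcal{H})$ the set of density operators on $\mathcal{H}$. For a linear operator $A$ on $\mathcal{H}$, its transpose $A^T$ is the operator on $\mathcal{H}^*$ defined by $(A^T\varphi)(x)=\varphi(Ax)$. $\mathcal{C}(\rho,\omega)=\{\Pi\in\mathcal{S}(\mathcal{H}\otimes\mathcal{H}^* ):\ \mathrm{tr}_{\mathcal{H}^*}[\Pi]=\omega,\ \mathrm{tr}_{\mathcal{H}}[\Pi]=\rho^T\}$. The Pauli matrices are $\sigma_1=\begin{bmatrix}0&1\\1&0\end{bmatrix}$, $\sigma_2=\begin{bmatrix}0&-i\\i&0\end{bmatrix}$, $\sigma_3=\sigma_z=\begin{bmatrix}1&0\\0&-1\end{bmatrix}$. $C_z=(\sigma_z\otimes I^T-I\otimes\sigma_z^T)^2$ and $D_z^2(\rho,\omega)=\inf\{\mathrm{tr}[\Pi C_z]:\Pi\in\mathcal{C}(\rho,\omega)\}$. The Bloch vector of $\rho$ is $\mathbf{b}_\rho=(\mathrm{tr}[\sigma_j\rho])_{j=1}^3$. *)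

theory Defs
  imports "HOL-Analysis.Analysis"
begin

text \<open>Operators on H = C^2 (and on its dual H*, in the dual basis) are 2x2 complex
  matrices, indexed by the numeral type 2 (indices 1 and 2). Operators on H (x) H*
  are matrices indexed by the product type 2 x 2, with (i,k) the basis vector
  e_i (x) e_k^*.\<close>

type_synonym cmat2 = "complex^2^2"
type_synonym cmat4 = "complex^(2\<times>2)^(2\<times>2)"

definition psd :: "complex^'n^'n \<Rightarrow> bool" where
  "psd A \<longleftrightarrow> (\<forall>v::complex^'n.
      (let q = (\<Sum>i\<in>UNIV. \<Sum>j\<in>UNIV. cnj (v$i) * A$i$j * v$j) in Im q = 0 \<and> Re q \<ge> 0))"

definition density :: "complex^'n^'n \<Rightarrow> bool" where
  "density A \<longleftrightarrow> psd A \<and> trace A = 1"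

definition kron :: "complex^'a::finite^'a \<Rightarrow> complex^'b::finite^'b \<Rightarrow> complex^('a\<times>'b)^('a\<times>'b)" where
  "kron A B = (\<chi> p q. A $ fst p $ fst q * B $ snd p $ snd q)"

definition ptrace2 :: "complex^('a::finite\<times>'b::finite)^('a\<times>'b) \<Rightarrow> complex^'a^'a" where
  "ptrace2 P = (\<chi> i j. \<Sum>k\<in>UNIV. P $ (i,k) $ (j,k))"

definition ptrace1 :: "complex^('a::finite\<times>'b::finite)^('a\<times>'b) \<Rightarrow> complex^'b^'b" where
  "ptrace1 P = (\<chi> k l. \<Sum>i\<in>UNIV. P $ (i,k) $ (i,l))"

text \<open>Pauli matrix sigma_z; the transpose A^T on H* has matrix transpose A in the dual basis.\<close>
definition sigma_z :: cmat2 where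
  "sigma_z = (\<chi> i j. if i = j then (if i = 1 then 1 else -1) else 0)"

definition couplings :: "cmat2 \<Rightarrow> cmat2 \<Rightarrow> cmat4 set" where
  "couplings \<rho> \<omega> = {P. density P \<and> ptrace2 P = \<omega> \<and> ptrace1 P = transpose \<rho>}"

definition C_z :: cmat4 where
  "C_z = (let M = kron sigma_z (transpose (mat 1)) - kron (mat 1) (transpose sigma_z) in M ** M)"

text \<open>tr[Pi C_z] is real for Hermitian Pi, C_z; we take its real part.\<close>
definition Dz2 :: "cmat2 \<Rightarrow> cmat2 \<Rightarrow> real" where
  "Dz2 \<rho> \<omega> = Inf ((\<lambda>P. Re (trace (P ** C_z))) ` couplings \<rho> \<omega>)"

text \<open>Third component of the Bloch vector, tr[sigma_3 rho] (real for density operators).\<close>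
definition bloch3 :: "cmat2 \<Rightarrow> real" where
  "bloch3 \<rho> = Re (trace (sigma_z ** \<rho>))"

end

theory Submission
  imports Defs
begin

lemma ite1l: "(if b then 1 else 0) * (x::complex) = (if b then x else 0)" by simp
lemma ite1r: "(x::complex) * (if b then 1 else 0) = (if b then x else 0)" by simp

lemma cnjite: "cnj (if b then 1 else 0) = (if b then 1 else (0::complex))" by simp

lemma psd_diag: assumes "psd (A::complex^'n^'n)" shows "Re (A$p$p) \<ge> 0"
proof -
  have "(\<Sum>i\<in>UNIV. \<Sum>j\<in>UNIV. cnj (axis p 1 $i) * A$i$j * (axis p (1::complex)) $j) = A$p$p"
    by (simp add: axis_def ite1l ite1r cnjite)
  moreover have "Re (\<Sum>i\<in>UNIV. \<Sum>j\<in>UNIV. cnj (axis p 1 $i) * A$i$j * (axis p (1::complex)) $j) \<ge> 0"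
    using assms[unfolded psd_def Let_def, THEN spec, of "axis p 1"] by (rule conjunct2)
  ultimately show ?thesis by simp
qed

definition sg :: "2 \<Rightarrow> complex" where "sg i = (if i = 1 then 1 else -1)"
lemma M_eq: "kron sigma_z (transpose (mat 1)) - kron (mat 1) (transpose sigma_z) =
   (\<chi> p q. if p = q then sg (fst p) - sg (snd p) else 0 :: cmat4)"
  by (auto simp: vec_eq_iff kron_def sigma_z_def mat_def transpose_def sg_def)
lemma sq: "(sg a - sg b)*(sg a - sg b) = (if a = b then 0 else 4)"
  using exhaust_2[of a] exhaust_2[of b] by (auto simp: sg_def)
lemma sdelta: "(\<Sum>r\<in>(UNIV::'n::finite set). if r = p then (c::complex) else 0) = c"
  by simp

lemma diag_mult: "((\<chi> p q. if p = q then f p else 0) ** (\<chi> p q. if p = q then f p else 0) :: complex^'n^'n)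
   = (\<chi> p q. if p = q then f p * f p else 0)"
proof -
  have "\<And>p q. (\<Sum>r\<in>UNIV. (if p = r then f p else 0) * (if r = q then f r else 0)) = (if p = q then f p * f p else 0)"
  proof -
    fix p q :: 'n
    have "(\<lambda>r. (if p = r then f p else 0) * (if r = q then f r else 0)) = (\<lambda>r. if r = p then (if p = q then f p * f p else 0) else 0)"
      by auto
    then show "(\<Sum>r\<in>UNIV. (if p = r then f p else 0) * (if r = q then f r else 0)) = (if p = q then f p * f p else 0)"
      by (simp only: sdelta)
  qed
  then show ?thesis by (simp add: vec_eq_iff matrix_matrix_mult_def)
qed
lemma Cz_eq: "C_z = (\<chi> p q. if p = q then (if fst p = snd p then 0 else 4) else 0)"
  unfolding C_z_def Let_def M_eq diag_mult sq by (simp add: case_prod_beta)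
lemma sum_22: "sum f (UNIV::(2\<times>2) set) = f (1,1) + f (1,2) + f (2,1) + f (2,2)"
proof -
  have "sum f (UNIV::(2\<times>2) set) = (\<Sum>a\<in>(UNIV::2 set). \<Sum>b\<in>(UNIV::2 set). f (a,b))"
    by (simp add: sum.cartesian_product UNIV_Times_UNIV[symmetric] del: UNIV_Times_UNIV)
  then show ?thesis by (simp add: sum_2 add.assoc)
qed
lemma trace_PC: "trace (P ** C_z) = 4 * (P$(1,2)$(1,2) + P$(2,1)$(2,1))"
proof -
  have "trace (P ** C_z) = (\<Sum>p\<in>UNIV. P$p$p * (if fst p = snd p then 0 else 4))"
  proof -
    have "\<And>p. (\<Sum>r\<in>UNIV. P$p$r * C_z$r$p) = P$p$p * (if fst p = snd p then 0 else 4)"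
    proof -
      fix p :: "2\<times>2"
      have "(\<lambda>r. P$p$r * C_z$r$p) = (\<lambda>r. if r = p then P$p$p * (if fst p = snd p then 0 else 4) else 0)"
        by (auto simp: Cz_eq)
      then show "(\<Sum>r\<in>UNIV. P$p$r * C_z$r$p) = P$p$p * (if fst p = snd p then 0 else 4)" by (simp only: sdelta)
    qed
    then show ?thesis by (simp add: trace_def matrix_matrix_mult_def)
  qed
  also have "\<dots> = 4 * (P$(1,2)$(1,2) + P$(2,1)$(2,1))" by (simp add: sum_22 algebra_simps)
  finally show ?thesis .
qed

lemma re4: "Re (4 * ((x::complex) + y)) = 4 * Re x + 4 * Re y"
  by simp

lemma coupling_val:
  assumes "P \<in> couplings \<rho> (\<chi> i j. (1/2) * ((mat 1 :: cmat2) $ i $ j + sigma_z $ i $ j))"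
  shows "Re (trace (P ** C_z)) = 4 * Re (\<rho>$2$2)"
proof -
  have d: "psd P" and p2: "ptrace2 P = (\<chi> i j. (1/2) * ((mat 1 :: cmat2) $ i $ j + sigma_z $ i $ j))"
    and p1: "ptrace1 P = transpose \<rho>"
    using assms by (auto simp: couplings_def density_def)
  have a: "P$(2,1)$(2,1) + P$(2,2)$(2,2) = 0"
    using arg_cong[OF p2, of "\<lambda>M. M$2$2"] by (simp add: ptrace2_def sum_2 mat_def sigma_z_def)
  have b: "P$(1,2)$(1,2) + P$(2,2)$(2,2) = \<rho>$2$2"
    using arg_cong[OF p1, of "\<lambda>M. M$2$2"] by (simp add: ptrace1_def sum_2 transpose_def)
  have r1: "Re (P$(2,1)$(2,1)) \<ge> 0" "Re (P$(2,2)$(2,2)) \<ge> 0" using psd_diag[OF d] by auto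
  have "Re (P$(2,1)$(2,1)) + Re (P$(2,2)$(2,2)) = 0" using arg_cong[OF a, of Re] by (simp only: plus_complex.sel zero_complex.sel)
  with r1 have z: "Re (P$(2,1)$(2,1)) = 0" "Re (P$(2,2)$(2,2)) = 0" by linarith+
  have "Re (P$(1,2)$(1,2)) + Re (P$(2,2)$(2,2)) = Re (\<rho>$2$2)" using arg_cong[OF b, of Re] by (simp only: plus_complex.sel)
  moreover have "Re (trace (P ** C_z)) = 4 * Re (P$(1,2)$(1,2)) + 4 * Re (P$(2,1)$(2,1))"
    unfolding trace_PC by (rule re4)
  ultimately show ?thesis using z by linarith
qed

lemma h2: "(a::complex) + b = 1 \<Longrightarrow> a*2 + b*2 = 2"
proof -
  assume "a + b = 1"
  moreover have "a*2+b*2 = (a+b)*2" by (simp add: algebra_simps)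
  ultimately show ?thesis by simp
qed

lemma kron_coupling:
  assumes "density \<rho>"
  shows "(\<chi> p q. (if fst p = 1 \<and> fst q = 1 then \<rho>$snd q$snd p else 0) :: cmat4) \<in>
     couplings \<rho> (\<chi> i j. (1/2) * ((mat 1 :: cmat2) $ i $ j + sigma_z $ i $ j))"
proof -
  let ?P = "(\<chi> p q. (if fst p = 1 \<and> fst q = 1 then \<rho>$snd q$snd p else 0) :: complex^(2\<times>2)^(2\<times>2))"
  have dr: "psd \<rho>" "trace \<rho> = 1" using assms by (auto simp: density_def)
  have "psd ?P" unfolding psd_def Let_def
  proof
    fix v :: "complex^(2\<times>2)"
    define u :: "complex^2" where "u = (\<chi> k. cnj (v$(1,k)))"
    have "(\<Sum>i\<in>UNIV. \<Sum>j\<in>UNIV. cnj (v$i) * ?P$i$j * v$j) =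
          (\<Sum>i\<in>UNIV. \<Sum>j\<in>UNIV. cnj (u$i) * \<rho>$i$j * u$j)"
      by (simp add: sum_22 sum_2 u_def)
    moreover have "Im (\<Sum>i\<in>UNIV. \<Sum>j\<in>UNIV. cnj (u$i) * \<rho>$i$j * u$j) = 0 \<and>
       0 \<le> Re (\<Sum>i\<in>UNIV. \<Sum>j\<in>UNIV. cnj (u$i) * \<rho>$i$j * u$j)"
      using dr(1) unfolding psd_def Let_def by blast
    ultimately show "Im (\<Sum>i\<in>UNIV. \<Sum>j\<in>UNIV. cnj (v$i) * ?P$i$j * v$j) = 0 \<and>
       0 \<le> Re (\<Sum>i\<in>UNIV. \<Sum>j\<in>UNIV. cnj (v$i) * ?P$i$j * v$j)"
      by simp
  qed
  moreover have "trace ?P = 1" using dr(2) by (simp add: trace_def sum_22 sum_2)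
  moreover have "ptrace2 ?P = (\<chi> i j. (1/2) * ((mat 1 :: cmat2) $ i $ j + sigma_z $ i $ j))"
    using dr(2) by (simp add: vec_eq_iff ptrace2_def sum_2 mat_def sigma_z_def trace_def forall_2)
      (rule h2)
  moreover have "ptrace1 ?P = transpose \<rho>"
    by (simp add: vec_eq_iff ptrace1_def sum_2 transpose_def)
  ultimately show ?thesis unfolding couplings_def density_def by blast
qed

theorem mainTheorem5:
  fixes \<rho> :: cmat2
  assumes "density \<rho>"
  shows "Dz2 \<rho> (\<chi> i j. (1/2) * ((mat 1 :: cmat2) $ i $ j + sigma_z $ i $ j)) = 2 - 2 * bloch3 \<rho>"
proof -
  let ?S = "couplings \<rho> (\<chi> i j. (1/2) * ((mat 1 :: cmat2) $ i $ j + sigma_z $ i $ j))"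
  have ne: "?S \<noteq> {}" using kron_coupling[OF assms] by blast
  have "(\<lambda>P. Re (trace (P ** C_z))) ` ?S = {4 * Re (\<rho>$2$2)}"
  proof -
    have "(\<lambda>P. Re (trace (P ** C_z))) ` ?S = (\<lambda>_. 4 * Re (\<rho>$2$2)) ` ?S"
      by (rule image_cong) (simp_all only: coupling_val)
    also have "\<dots> = {4 * Re (\<rho>$2$2)}" using ne by (simp only: image_constant_conv if_False)
    finally show ?thesis .
  qed
  then have "Dz2 \<rho> (\<chi> i j. (1/2) * ((mat 1 :: cmat2) $ i $ j + sigma_z $ i $ j)) = 4 * Re (\<rho>$2$2)"
    unfolding Dz2_def by simp
  moreover have "trace \<rho> = 1" using assms by (simp add: density_def)
  then have "Re (\<rho>$1$1) + Re (\<rho>$2$2) = 1" by (simp add: trace_def sum_2 flip: plus_complex.sel)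
  moreover have "bloch3 \<rho> = Re (\<rho>$1$1) - Re (\<rho>$2$2)"
    by (simp add: bloch3_def trace_def sum_2 matrix_matrix_mult_def sigma_z_def)
  ultimately show ?thesis by linarith
qed

end
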